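(* For every profile $P$: $|\mathit{TC}(P)|=1$ if and only if all agents have pairwise distinct top choices. Analogously, $|\mathit{BC}(P)|=1$ if and only if all agents have pairwise distinct bottom choices.
   Context: Let $N=\{1,\dots,n\}$ be agents and $H$ a set of $n$ houses. A profile $P=(\succ_1,\dots,\succ_n)$ gives each agent a strict linear order on $H$; an agent's top (bottom) choice is the house she ranks first (last). An assignment is a bijection $N\to H$; $M$ is the set of assignments. Agent $x$ weakly prefers $\mu$ to $\lambda$ if $\mu(x)\succ_x\lambda(x)$ or $\mu(x)=\lambda(x)$. $N_{\mu,\lambda}$ is the set of agents weakly preferring $\mu$ to $\lambda$; $\mu\succsim\lambda$ if $|N_{\mu,\lambda}|\ge|N_{\lambda,\mu}|$, and $\succsim^*$ is its transitive closure. $\mathit{TC}(P)=\{\mu\in M:\mu\succsim^*\lambda\ \forall\lambda\in M\}$, $\mathit{BC}(P)=\{\mu\in M:\lambda\succsim^*\mu\ \forall\lambda\in M\}$. *)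

theory Defs
  imports Main
begin

text \<open>A profile P gives each agent x a strict linear order P x on H,
  encoded as a relation: (h, h') \<in> P x means h \<succ>_x h'.\<close>

definition is_profile :: "'a set \<Rightarrow> 'h set \<Rightarrow> ('a \<Rightarrow> ('h \<times> 'h) set) \<Rightarrow> bool" where
  "is_profile N H P \<longleftrightarrow> (\<forall>x\<in>N. strict_linear_order_on H (P x) \<and> P x \<subseteq> H \<times> H)"

definition top_choice :: "'h set \<Rightarrow> ('h \<times> 'h) set \<Rightarrow> 'h" where
  "top_choice H r = (THE h. h \<in> H \<and> (\<forall>h'\<in>H. h' \<noteq> h \<longrightarrow> (h, h') \<in> r))"

definition bottom_choice :: "'h set \<Rightarrow> ('h \<times> 'h) set \<Rightarrow> 'h" where
  "bottom_choice H r = (THE h. h \<in> H \<and> (\<forall>h'\<in>H. h' \<noteq> h \<longrightarrow> (h', h) \<in> r))"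

text \<open>Assignments: bijections N \<rightarrow> H (extensional: undefined outside N, so that
  M is a finite set of functions).\<close>
definition assignments :: "'a set \<Rightarrow> 'h set \<Rightarrow> ('a \<Rightarrow> 'h) set" where
  "assignments N H = {\<mu>. bij_betw \<mu> N H \<and> (\<forall>x. x \<notin> N \<longrightarrow> \<mu> x = undefined)}"

definition weak_pref_agents ::
  "'a set \<Rightarrow> ('a \<Rightarrow> ('h \<times> 'h) set) \<Rightarrow> ('a \<Rightarrow> 'h) \<Rightarrow> ('a \<Rightarrow> 'h) \<Rightarrow> 'a set" where
  "weak_pref_agents N P \<mu> \<nu> = {x\<in>N. (\<mu> x, \<nu> x) \<in> P x \<or> \<mu> x = \<nu> x}"

definition maj_rel :: "'a set \<Rightarrow> 'h set \<Rightarrow> ('a \<Rightarrow> ('h \<times> 'h) set) \<Rightarrow> (('a \<Rightarrow> 'h) \<times> ('a \<Rightarrow> 'h)) set" where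
  "maj_rel N H P = {(\<mu>, \<nu>). \<mu> \<in> assignments N H \<and> \<nu> \<in> assignments N H \<and>
      card (weak_pref_agents N P \<mu> \<nu>) \<ge> card (weak_pref_agents N P \<nu> \<mu>)}"

definition TC :: "'a set \<Rightarrow> 'h set \<Rightarrow> ('a \<Rightarrow> ('h \<times> 'h) set) \<Rightarrow> ('a \<Rightarrow> 'h) set" where
  "TC N H P = {\<mu> \<in> assignments N H. \<forall>\<nu>\<in>assignments N H. (\<mu>, \<nu>) \<in> (maj_rel N H P)\<^sup>+}"

definition BC :: "'a set \<Rightarrow> 'h set \<Rightarrow> ('a \<Rightarrow> ('h \<times> 'h) set) \<Rightarrow> ('a \<Rightarrow> 'h) set" where
  "BC N H P = {\<mu> \<in> assignments N H. \<forall>\<nu>\<in>assignments N H. (\<nu>, \<mu>) \<in> (maj_rel N H P)\<^sup>+}"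

end

theory Submission
  imports Defs "HOL-Combinatorics.Transposition"
begin

lemma top_ex0:
  assumes "finite H" "H \<noteq> {}"
  shows "trans r \<Longrightarrow> total_on H r \<Longrightarrow> \<exists>h\<in>H. \<forall>h'\<in>H. h' \<noteq> h \<longrightarrow> (h, h') \<in> r"
  using assms
proof (induction H rule: finite_ne_induct)
  case (singleton a) then show ?case by auto
next
  case (insert a F)
  have "total_on F r" using insert.prems unfolding total_on_def by blast
  then obtain t where t: "t \<in> F" "\<forall>h'\<in>F. h' \<noteq> t \<longrightarrow> (t, h') \<in> r" using insert by auto
  have at: "a \<noteq> t" using t insert.hyps by auto
  then have "(a,t) \<in> r \<or> (t,a) \<in> r" using insert.prems t unfolding total_on_def by blast
  then show ?case
  proof
    assume "(a,t) \<in> r"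
    then have "\<forall>h'\<in>insert a F. h' \<noteq> a \<longrightarrow> (a, h') \<in> r"
    proof (intro ballI impI)
      fix h' assume h': "h' \<in> insert a F" "h' \<noteq> a"
      show "(a, h') \<in> r"
      proof (cases "h' = t")
        case True then show ?thesis using \<open>(a,t) \<in> r\<close> by simp
      next
        case False
        then have "(t, h') \<in> r" using t h' by blast
        then show ?thesis using transD[OF insert.prems(1) \<open>(a,t) \<in> r\<close>] by blast
      qed
    qed
    then show ?case by blast
  next
    assume "(t,a) \<in> r"
    then have "\<forall>h'\<in>insert a F. h' \<noteq> t \<longrightarrow> (t, h') \<in> r"
      using t by blast
    then show ?case using t by blast
  qed
qed

lemma top_props:
  assumes "finite H" "H \<noteq> {}" "strict_linear_order_on H r"
  shows "top_choice H r \<in> H \<and> (\<forall>h'\<in>H. h' \<noteq> top_choice H r \<longrightarrow> (top_choice H r, h') \<in> r)"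
proof -
  have tr: "trans r" and ir: "irrefl r" and tot: "total_on H r"
    using assms(3) unfolding strict_linear_order_on_def by auto
  obtain h where h: "h\<in>H" "\<forall>h'\<in>H. h' \<noteq> h \<longrightarrow> (h, h') \<in> r"
    using top_ex0[OF assms(1,2) tr tot] by blast
  have "\<exists>!h. h \<in> H \<and> (\<forall>h'\<in>H. h' \<noteq> h \<longrightarrow> (h, h') \<in> r)"
  proof (rule ex1I[of _ h])
    show "h \<in> H \<and> (\<forall>h'\<in>H. h' \<noteq> h \<longrightarrow> (h, h') \<in> r)" using h by blast
  next
    fix g assume g: "g \<in> H \<and> (\<forall>h'\<in>H. h' \<noteq> g \<longrightarrow> (g, h') \<in> r)"
    show "g = h"
    proof (rule ccontr)
      assume "g \<noteq> h"
      then have "(g,h) \<in> r" "(h,g) \<in> r" using g h by auto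
      then have "(g,g) \<in> r" using tr unfolding trans_def by blast
      then show False using ir unfolding irrefl_def by blast
    qed
  qed
  then show ?thesis unfolding top_choice_def by (rule theI')
qed

lemma asym_slo:
  assumes "strict_linear_order_on H r" "(a,b) \<in> r"
  shows "(b,a) \<notin> r"
  using assms unfolding strict_linear_order_on_def trans_def irrefl_def by blast

lemma TC_main:
  fixes N :: "'a set" and H :: "'h set" and P :: "'a \<Rightarrow> ('h \<times> 'h) set"
  assumes fN: "finite N" and fH: "finite H" and cNH: "card N = card H"
    and prof: "is_profile N H P"
  shows "card (TC N H P) = 1 \<longleftrightarrow> inj_on (\<lambda>x. top_choice H (P x)) N"
proof -
  define t where "t = (\<lambda>x. top_choice H (P x))"
  have slo: "\<And>x. x \<in> N \<Longrightarrow> strict_linear_order_on H (P x)"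
    using prof unfolding is_profile_def by blast
  have tp: "\<And>x. x \<in> N \<Longrightarrow> t x \<in> H \<and> (\<forall>h'\<in>H. h' \<noteq> t x \<longrightarrow> (t x, h') \<in> P x)"
  proof -
    fix x assume x: "x \<in> N"
    then have "H \<noteq> {}" using fN fH cNH by auto
    then show "t x \<in> H \<and> (\<forall>h'\<in>H. h' \<noteq> t x \<longrightarrow> (t x, h') \<in> P x)"
      unfolding t_def using top_props[OF fH _ slo[OF x]] by blast
  qed
  let ?R = "maj_rel N H P"
  let ?M = "assignments N H"
  let ?W = "weak_pref_agents N P"
  have Wsub: "\<And>a b. ?W a b \<subseteq> N" unfolding weak_pref_agents_def by auto
  have cardW: "\<And>a b. card (?W a b) \<le> card N" using Wsub fN by (simp add: card_mono)
  show ?thesis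
  proof
    assume c1: "card (TC N H P) = 1"
    then obtain \<mu> where TCmu: "TC N H P = {\<mu>}" using card_1_singletonE by blast
    then have muM: "\<mu> \<in> ?M" and mureach: "\<forall>l\<in>?M. (\<mu>,l) \<in> ?R\<^sup>+"
      unfolding TC_def by auto
    have bij: "bij_betw \<mu> N H" using muM unfolding assignments_def by auto
    have eq: "\<forall>x\<in>N. \<mu> x = t x"
    proof (rule ccontr)
      assume "\<not> (\<forall>x\<in>N. \<mu> x = t x)"
      then obtain x where x: "x \<in> N" "\<mu> x \<noteq> t x" by blast
      have txH: "t x \<in> H" using tp x by blast
      then obtain y where y: "y \<in> N" "\<mu> y = t x" using bij unfolding bij_betw_def by auto
      have xy: "x \<noteq> y" using x y by auto
      define \<nu> where "\<nu> = \<mu> \<circ> transpose x y"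
      have nux: "\<nu> x = t x" and nuy: "\<nu> y = \<mu> x"
        and nuz: "\<And>z. z \<noteq> x \<Longrightarrow> z \<noteq> y \<Longrightarrow> \<nu> z = \<mu> z"
        unfolding \<nu>_def using y by auto
      have nuM: "\<nu> \<in> ?M"
      proof -
        have "bij_betw (transpose x y) N N" using x y by simp
        then have "bij_betw \<nu> N H" unfolding \<nu>_def using bij bij_betw_trans by blast
        moreover have "\<forall>z. z \<notin> N \<longrightarrow> \<nu> z = undefined"
        proof (intro allI impI)
          fix z assume z: "z \<notin> N"
          then have "z \<noteq> x" "z \<noteq> y" using x y by auto
          then have "\<nu> z = \<mu> z" by (rule nuz)
          then show "\<nu> z = undefined" using z muM unfolding assignments_def by simp
        qed
        ultimately show ?thesis unfolding assignments_def by blast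
      qed
      have muxH: "\<mu> x \<in> H" using bij x unfolding bij_betw_def by auto
      have pref: "(t x, \<mu> x) \<in> P x" using tp[OF x(1)] muxH x(2) by metis
      have A: "N - {y} \<subseteq> ?W \<nu> \<mu>"
      proof
        fix z assume z: "z \<in> N - {y}"
        show "z \<in> ?W \<nu> \<mu>"
        proof (cases "z = x")
          case True then show ?thesis using z pref nux unfolding weak_pref_agents_def by auto
        next
          case False then show ?thesis using z nuz unfolding weak_pref_agents_def by auto
        qed
      qed
      have B: "?W \<mu> \<nu> \<subseteq> N - {x}"
      proof
        fix z assume z: "z \<in> ?W \<mu> \<nu>"
        have "z \<noteq> x"
        proof
          assume "z = x"
          then have "(\<mu> x, t x) \<in> P x \<or> \<mu> x = t x" using z nux unfolding weak_pref_agents_def by auto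
          then show False using asym_slo[OF slo[OF x(1)] pref] x(2) by blast
        qed
        then show "z \<in> N - {x}" using z Wsub by blast
      qed
      have "card (?W \<mu> \<nu>) \<le> card (N - {x})" using B fN by (simp add: card_mono)
      also have "\<dots> = card (N - {y})" using x y fN by simp
      also have "\<dots> \<le> card (?W \<nu> \<mu>)" using A fN Wsub by (meson card_mono finite_subset)
      finally have "(\<nu>, \<mu>) \<in> ?R" using nuM muM unfolding maj_rel_def by auto
      then have "\<forall>l\<in>?M. (\<nu>,l) \<in> ?R\<^sup>+" using mureach trancl_into_trancl2[of \<nu> \<mu> ?R] by blast
      then have "\<nu> \<in> TC N H P" using nuM unfolding TC_def by blast
      then have "\<nu> = \<mu>" using TCmu by blast
      then show False using nux x(2) by simp
    qed
    have "inj_on \<mu> N" using bij unfolding bij_betw_def by blast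
    then have "inj_on t N" using eq inj_on_cong[of N \<mu> t] by blast
    then show "inj_on (\<lambda>x. top_choice H (P x)) N" unfolding t_def .
  next
    assume inj: "inj_on (\<lambda>x. top_choice H (P x)) N"
    define ms where "ms = (\<lambda>x. if x \<in> N then t x else undefined)"
    have injm: "inj_on ms N" using inj unfolding ms_def t_def inj_on_def by auto
    have imgsub: "ms ` N \<subseteq> H" using tp unfolding ms_def by auto
    have "card (ms ` N) = card H" using injm cNH by (simp add: card_image)
    then have "ms ` N = H" using imgsub fH by (simp add: card_subset_eq)
    then have msM: "ms \<in> ?M" using injm unfolding assignments_def bij_betw_def ms_def by auto
    have Wfull: "\<And>\<nu>. \<nu> \<in> ?M \<Longrightarrow> ?W ms \<nu> = N"
    proof -
      fix \<nu> assume nM: "\<nu> \<in> ?M"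
      have "\<And>z. z \<in> N \<Longrightarrow> (ms z, \<nu> z) \<in> P z \<or> ms z = \<nu> z"
      proof -
        fix z assume z: "z \<in> N"
        have "\<nu> z \<in> H" using nM z unfolding assignments_def bij_betw_def by auto
        then show "(ms z, \<nu> z) \<in> P z \<or> ms z = \<nu> z" using tp[OF z] z unfolding ms_def by auto
      qed
      then show "?W ms \<nu> = N" unfolding weak_pref_agents_def by auto
    qed
    have key: "\<And>\<nu>. (\<nu>, ms) \<in> ?R \<Longrightarrow> \<nu> = ms"
    proof (rule ccontr)
      fix \<nu> assume r: "(\<nu>, ms) \<in> ?R" and ne: "\<nu> \<noteq> ms"
      have nM: "\<nu> \<in> ?M" using r unfolding maj_rel_def by auto
      obtain x where x: "\<nu> x \<noteq> ms x" using ne by blast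
      have xN: "x \<in> N"
      proof (rule ccontr)
        assume "x \<notin> N"
        then show False using x nM unfolding assignments_def ms_def by auto
      qed
      have "?W \<nu> ms \<subseteq> N - {x}"
      proof
        fix z assume z: "z \<in> ?W \<nu> ms"
        have "z \<noteq> x"
        proof
          assume zx: "z = x"
          have "\<nu> x \<in> H" using nM xN unfolding assignments_def bij_betw_def by auto
          then have "(t x, \<nu> x) \<in> P x" using tp[OF xN] x xN unfolding ms_def by auto
          moreover have "(\<nu> x, ms x) \<in> P x" using z zx x unfolding weak_pref_agents_def by auto
          ultimately show False using asym_slo[OF slo[OF xN]] xN unfolding ms_def by auto
        qed
        then show "z \<in> N - {x}" using z Wsub by blast
      qed
      then have "card (?W \<nu> ms) \<le> card (N - {x})" using fN by (simp add: card_mono)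
      also have "\<dots> < card N" using xN fN card_gt_0_iff[of N] by auto
      also have "\<dots> = card (?W ms \<nu>)" using Wfull[OF nM] by simp
      finally show False using r unfolding maj_rel_def by auto
    qed
    have backw: "\<And>a b. (a, b) \<in> ?R\<^sup>+ \<Longrightarrow> b = ms \<Longrightarrow> a = ms"
    proof -
      fix a b assume "(a, b) \<in> ?R\<^sup>+"
      then show "b = ms \<Longrightarrow> a = ms"
      proof (induction rule: trancl_induct)
        case (base y) then show ?case using key by blast
      next
        case (step y z) then show ?case using key by blast
      qed
    qed
    have "TC N H P = {ms}"
    proof
      show "TC N H P \<subseteq> {ms}"
      proof
        fix l assume "l \<in> TC N H P"
        then have "(l, ms) \<in> ?R\<^sup>+" using msM unfolding TC_def by blast
        then show "l \<in> {ms}" using backw by blast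
      qed
    next
      have "\<forall>\<nu>\<in>?M. (ms, \<nu>) \<in> ?R"
        using Wfull msM cardW unfolding maj_rel_def by auto
      then show "{ms} \<subseteq> TC N H P" using msM unfolding TC_def by blast
    qed
    then show "card (TC N H P) = 1" by simp
  qed
qed


lemma BC_conv:
  fixes N :: "'a set" and H :: "'h set" and P :: "'a \<Rightarrow> ('h \<times> 'h) set"
  shows "BC N H P = TC N H (\<lambda>x. (P x)\<inverse>)"
proof -
  have W: "\<And>m n. weak_pref_agents N (\<lambda>x. (P x)\<inverse>) m n = weak_pref_agents N P n m"
    unfolding weak_pref_agents_def by auto
  have R: "maj_rel N H (\<lambda>x. (P x)\<inverse>) = (maj_rel N H P)\<inverse>"
    unfolding maj_rel_def W by auto
  show ?thesis unfolding BC_def TC_def R trancl_converse by auto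
qed

lemma prof_conv:
  assumes "is_profile N H P"
  shows "is_profile N H (\<lambda>x. (P x)\<inverse>)"
  using assms unfolding is_profile_def strict_linear_order_on_def
  by (auto simp: trans_def irrefl_def total_on_def)

lemma top_conv: "top_choice H (r\<inverse>) = bottom_choice H r"
  unfolding top_choice_def bottom_choice_def by simp

theorem lemmaB2:
  fixes N :: "'a set" and H :: "'h set" and P :: "'a \<Rightarrow> ('h \<times> 'h) set"
  assumes "finite N" and "finite H" and "card N = card H"
    and "is_profile N H P"
  shows "(card (TC N H P) = 1 \<longleftrightarrow> inj_on (\<lambda>x. top_choice H (P x)) N)
       \<and> (card (BC N H P) = 1 \<longleftrightarrow> inj_on (\<lambda>x. bottom_choice H (P x)) N)"
proof
  show "card (TC N H P) = 1 \<longleftrightarrow> inj_on (\<lambda>x. top_choice H (P x)) N"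
    using TC_main[OF assms] .
  have "card (TC N H (\<lambda>x. (P x)\<inverse>)) = 1 \<longleftrightarrow> inj_on (\<lambda>x. top_choice H ((P x)\<inverse>)) N"
    using TC_main[OF assms(1,2,3) prof_conv[OF assms(4)]] .
  then show "card (BC N H P) = 1 \<longleftrightarrow> inj_on (\<lambda>x. bottom_choice H (P x)) N"
    unfolding BC_conv top_conv .
qed

end
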